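(* For $A,x\in\mathbb{R}$ define $E_0(A,x):=1$, $E_1(A,x):=e^{(1-x)A}$ and, for $n\ge2$, \[ E_n(A,x):=\begin{cases} \exp\!\Big(\big[x(E_1+E_3+\cdots+E_{n-1})-\tfrac n2\big]A\Big), & n \text{ even},\\[4pt] \exp\!\Big(\big[\tfrac{n+1}{2}-x(E_0+E_2+\cdots+E_{n-1})\big]A\Big), & n\text{ odd},\end{cases} \] with all $E_j$ evaluated at $(A,x)$. Define $\varphi_1(A,x):=x-1$, $\varphi_n(A,x):=\varphi_{n-1}(A,x)-1+xE_{n-1}(A,x)$ for $n\ge2$, and the polynomial $p_n(A):=\frac{\partial\varphi_n}{\partial x}(A,1)$. Then for every $n\ge1$, the polynomials $\frac{p_{2n}(A)}{2-A}$ and $p_{2n+1}(A)$ are even functions of $A$.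
   Context: For every $n\ge1$, $2-A$ divides $p_{2n}(A)$, so $\frac{p_{2n}(A)}{2-A}$ is a polynomial. *)

theory Defs
  imports "HOL-Analysis.Analysis" "HOL-Computational_Algebra.Polynomial"
begin

function E :: "nat \<Rightarrow> real \<Rightarrow> real \<Rightarrow> real" where
  "E n A x =
     (if n = 0 then 1
      else if n = 1 then exp ((1 - x) * A)
      else if even n then exp ((x * (\<Sum>j | j < n \<and> odd j. E j A x) - real n / 2) * A)
      else exp ((real (n + 1) / 2 - x * (\<Sum>j | j < n \<and> even j. E j A x)) * A))"
  by pat_completeness auto
termination
  by (relation "Wellfounded.measure (\<lambda>(n, A, x). n)") auto

text \<open>phi n A x = varphi_n(A,x) for n >= 1 (the value at n = 0 is an unused dummy).\<close>
fun phi :: "nat \<Rightarrow> real \<Rightarrow> real \<Rightarrow> real" where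
  "phi 0 A x = 0"
| "phi (Suc 0) A x = x - 1"
| "phi (Suc (Suc m)) A x = phi (Suc m) A x - 1 + x * E (Suc m) A x"

definition p :: "nat \<Rightarrow> real \<Rightarrow> real" where
  "p n A = deriv (\<lambda>x. phi n A x) 1"

end

theory Submission
  imports Defs
begin

declare E.simps[simp del]

lemma E_ev: "even n \<Longrightarrow> E n A x = exp ((x * (\<Sum>j | j < n \<and> odd j. E j A x) - real n / 2) * A)"
  by (subst E.simps) auto

lemma E_od: "odd n \<Longrightarrow> E n A x = exp ((real (n + 1) / 2 - x * (\<Sum>j | j < n \<and> even j. E j A x)) * A)"
proof -
  assume "odd n"
  show ?thesis
  proof (cases "n = 1")
    case True
    have "{j. j < n \<and> even j} = {0}" using True by auto
    then show ?thesis using True by (subst E.simps) (simp add: E_ev[of 0])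
  next
    case False
    then show ?thesis using \<open>odd n\<close> by (subst E.simps) auto
  qed
qed

lemma sum_Suc_filter:
  "(\<Sum>j | j < Suc n \<and> P j. f j) = (\<Sum>j | j < n \<and> P j. f j) + (if P n then f n else (0::real))"
proof (cases "P n")
  case True
  have fin: "finite {j. j < n \<and> P j}" by (rule finite_subset[of _ "{..<n}"]) auto
  have "{j. j < Suc n \<and> P j} = insert n {j. j < n \<and> P j}" using True by auto
  then show ?thesis using True fin by simp
next
  case False
  have "{j. j < Suc n \<and> P j} = {j. j < n \<and> P j}" using False less_Suc_eq by auto
  then show ?thesis using False by simp
qed

lemma cnt_odd: "(\<Sum>j | j < n \<and> odd j. (1::real)) = real (n div 2)"
proof (induction n)
  case 0 then show ?case by simp
next
  case (Suc n) then show ?case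
    by (simp only: sum_Suc_filter) (cases "even n", auto)
qed

lemma cnt_even: "(\<Sum>j | j < n \<and> even j. (1::real)) = real ((n + 1) div 2)"
proof (induction n)
  case 0 then show ?case by simp
next
  case (Suc n) then show ?case
    by (simp only: sum_Suc_filter) (cases "even n", auto)
qed

function e :: "nat \<Rightarrow> real \<Rightarrow> real" where
  "e n A = (if even n then A * (real n / 2 + (\<Sum>j | j < n \<and> odd j. e j A))
            else - A * (real (n + 1) / 2 + (\<Sum>j | j < n \<and> even j. e j A)))"
  by pat_completeness auto
termination
  by (relation "Wellfounded.measure (\<lambda>(n, A). n)") auto

declare e.simps[simp del]

lemma E_deriv: "E n A 1 = 1 \<and> ((\<lambda>x. E n A x) has_real_derivative e n A) (at 1)"
proof (induction n rule: less_induct)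
  case (less n)
  show ?case
  proof (cases "even n")
    case True
    define S where "S = (\<lambda>x. (\<Sum>j | j < n \<and> odd j. E j A x))"
    have S1: "S 1 = real n / 2"
    proof -
      have "S 1 = (\<Sum>j | j < n \<and> odd j. (1::real))" unfolding S_def
        by (rule sum.cong) (use less in auto)
      also have "\<dots> = real n / 2" unfolding cnt_odd using True by (auto elim!: evenE)
      finally show ?thesis .
    qed
    have dS: "(S has_real_derivative (\<Sum>j | j < n \<and> odd j. e j A)) (at 1)"
      unfolding S_def apply (rule DERIV_sum[where f="\<lambda>x j. E j A x"])
 using less.IH apply blast done
    have eq: "(\<lambda>x. E n A x) = (\<lambda>x. exp ((x * S x - real n / 2) * A))"
      using True by (auto simp: S_def E_ev)
    have "((\<lambda>x. exp ((x * S x - real n / 2) * A)) has_real_derivative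
        exp ((1 * S 1 - real n / 2) * A) * ((1 * S 1 + 1 * (\<Sum>j | j < n \<and> odd j. e j A) - 0) * A)) (at 1)"
      using dS by (auto intro!: derivative_eq_intros)
    then show ?thesis using True S1 eq
      by (auto simp: E_ev[of n] S_def e.simps[of n] algebra_simps)
  next
    case False
    define S where "S = (\<lambda>x. (\<Sum>j | j < n \<and> even j. E j A x))"
    have S1: "S 1 = real (n + 1) / 2"
    proof -
      have "S 1 = (\<Sum>j | j < n \<and> even j. (1::real))" unfolding S_def
        by (rule sum.cong) (use less in auto)
      also have "\<dots> = real (n + 1) / 2" unfolding cnt_even using False by (auto elim!: oddE)
      finally show ?thesis .
    qed
    have dS: "(S has_real_derivative (\<Sum>j | j < n \<and> even j. e j A)) (at 1)"
      unfolding S_def by (rule DERIV_sum[where f="\<lambda>x j. E j A x"]) (use less.IH in blast)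
    have eq: "(\<lambda>x. E n A x) = (\<lambda>x. exp ((real (n + 1) / 2 - x * S x) * A))"
      using False by (auto simp: S_def E_od)
    have "((\<lambda>x. exp ((real (n + 1) / 2 - x * S x) * A)) has_real_derivative
        exp ((real (n + 1) / 2 - 1 * S 1) * A) * ((0 - (1 * S 1 + 1 * (\<Sum>j | j < n \<and> even j. e j A))) * A)) (at 1)"
      using dS by (auto intro!: derivative_eq_intros)
    moreover have "exp ((real (n + 1) / 2 - 1 * S 1) * A) * ((0 - (1 * S 1 + 1 * (\<Sum>j | j < n \<and> even j. e j A))) * A) = e n A"
      using False by (simp add: S1 e.simps[of n] algebra_simps)
    moreover have "E n A 1 = 1" using eq S1 by (simp add: fun_eq_iff)
    ultimately show ?thesis using eq by simp
  qed
qed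


fun pp :: "nat \<Rightarrow> real \<Rightarrow> real" where
  "pp 0 A = 0"
| "pp (Suc 0) A = 1"
| "pp (Suc (Suc m)) A = pp (Suc m) A + 1 + e (Suc m) A"

lemma phi_deriv: "n \<ge> 1 \<Longrightarrow> ((\<lambda>x. phi n A x) has_real_derivative pp n A) (at 1)"
proof (induction n A rule: pp.induct)
  case (1 A) then show ?case by simp
next
  case (2 A) then show ?case by (auto intro!: derivative_eq_intros)
next
  case (3 m A)
  have d1: "((\<lambda>x. phi (Suc m) A x) has_real_derivative pp (Suc m) A) (at 1)" using 3 by simp
  have d2: "((\<lambda>x. E (Suc m) A x) has_real_derivative e (Suc m) A) (at 1)" and v: "E (Suc m) A 1 = 1"
    using E_deriv by auto
  have d3: "((\<lambda>x. x * E (Suc m) A x) has_real_derivative (1 * E (Suc m) A 1 + e (Suc m) A * 1)) (at 1)"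
    by (rule DERIV_mult[OF DERIV_ident d2])
  have "((\<lambda>x. phi (Suc m) A x - 1 + x * E (Suc m) A x) has_real_derivative
      pp (Suc m) A - 0 + (1 * E (Suc m) A 1 + e (Suc m) A * 1)) (at 1)"
    by (rule DERIV_add[OF DERIV_diff[OF d1 DERIV_const] d3])
  then show ?case using v by (simp add: add.assoc)
qed

lemma p_pp: "n \<ge> 1 \<Longrightarrow> p n A = pp n A"
  unfolding p_def by (rule DERIV_imp_deriv) (rule phi_deriv)

abbreviation So where "So n A \<equiv> (\<Sum>j | j < n \<and> odd j. e j A)"
abbreviation Se where "Se n A \<equiv> (\<Sum>j | j < n \<and> even j. e j A)"

lemma pp_sum: "n \<ge> 1 \<Longrightarrow> pp n A = real n + So n A + Se n A"
proof (induction n A rule: pp.induct)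
  case (1 A) then show ?case by simp
next
  case (2 A)
  have "{j. j < Suc 0 \<and> even j} = {0}" "{j. j < Suc 0 \<and> odd j} = {}" by (auto elim: oddE)
  then show ?case by (simp add: e.simps[of 0])
next
  case (3 m A)
  then show ?case by (simp only: pp.simps sum_Suc_filter) (cases "even (Suc m)"; simp)
qed

lemma So_Suc: "So (Suc n) A = So n A + (if odd n then e n A else 0)"
  using sum_Suc_filter[where n=n and P=odd and f="\<lambda>j. e j A"] by simp
lemma Se_Suc: "Se (Suc n) A = Se n A + (if even n then e n A else 0)"
  using sum_Suc_filter[where n=n and P=even and f="\<lambda>j. e j A"] by simp

definition X where "X k A = real k + So (2 * k) A"
definition Y where "Y k A = real k + 1 + Se (2 * k + 1) A"

lemma e_even: "e (2 * k) A = A * X k A"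
  by (subst e.simps) (simp add: X_def)

lemma e_odd: "e (2 * k + 1) A = - A * Y k A"
  by (subst e.simps) (simp add: Y_def field_simps)

lemma e_odd': "e (Suc (2 * k)) A = - A * Y k A"
  using e_odd[of k A] by simp
lemma e_even': "e (Suc (Suc (2 * k))) A = A * X (Suc k) A"
  using e_even[of "Suc k" A] by simp

lemma X_Suc: "X (Suc k) A = X k A + 1 - A * Y k A"
proof -
  have "So (2 * Suc k) A = So (2 * k) A + e (2 * k + 1) A"
    by (simp add: So_Suc Se_Suc)
  then show ?thesis by (simp add: X_def e_odd')
qed

lemma Y_Suc: "Y (Suc k) A = Y k A + 1 + A * X (Suc k) A"
proof -
  have "Se (2 * Suc k + 1) A = Se (2 * k + 1) A + e (2 * Suc k) A"
    by (simp add: So_Suc Se_Suc)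
  then show ?thesis by (simp add: Y_def e_even')
qed

lemma p_odd: "p (2 * n + 1) A = X n A + Y n A"
proof -
  have "p (2 * n + 1) A = real (2 * n + 1) + So (2 * n + 1) A + Se (2 * n + 1) A"
    by (simp add: p_pp pp_sum)
  also have "So (2 * n + 1) A = So (2 * n) A" by (simp add: So_Suc)
  finally show ?thesis by (simp add: X_def Y_def)
qed

lemma p_even: "p (2 * Suc m) A = X (Suc m) A + Y m A"
proof -
  have "p (2 * Suc m) A = real (2 * Suc m) + So (2 * Suc m) A + Se (2 * Suc m) A"
    by (simp add: p_pp pp_sum del: mult_Suc_right)
  also have "Se (2 * Suc m) A = Se (2 * m + 1) A"
    by (simp add: So_Suc Se_Suc)
  finally show ?thesis by (simp add: X_def Y_def)
qed

lemma Z_rec: "X (Suc (Suc k)) A + Y (Suc (Suc k)) A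
   = (2 - A^2) * (X (Suc k) A + Y (Suc k) A) - (X k A + Y k A)"
  by (simp add: X_Suc Y_Suc algebra_simps power2_eq_square)

lemma W_rec: "X (Suc (Suc (Suc k))) A + Y (Suc (Suc k)) A
   = (2 - A^2) * (X (Suc (Suc k)) A + Y (Suc k) A) - (X (Suc k) A + Y k A)"
  by (simp add: X_Suc Y_Suc algebra_simps power2_eq_square)

lemma X0: "X 0 A = 0" by (simp add: X_def)
lemma Y0: "Y 0 A = 1"
proof -
  have "{j. j < Suc 0 \<and> even j} = {0}" by auto
  then show ?thesis by (simp add: Y_def e.simps[of 0])
qed

fun Qp :: "nat \<Rightarrow> real poly" where
  "Qp 0 = 1"
| "Qp (Suc 0) = [:2, 0, -1:]"
| "Qp (Suc (Suc k)) = [:2, 0, -1:] * Qp (Suc k) - Qp k"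

lemma Z_even: "X k (- A) + Y k (- A) = X k A + Y k A"
proof (induction k rule: Qp.induct)
  case 1 then show ?case by (simp add: X0 Y0)
next
  case 2 then show ?case by (simp add: X_Suc Y_Suc X0 Y0 algebra_simps)
next
  case (3 k) then show ?case by (simp only: Z_rec) simp
qed

lemma W_poly: "X (Suc k) A + Y k A = (2 - A) * poly (Qp k) A"
proof (induction k rule: Qp.induct)
  case 1 then show ?case by (simp add: X_Suc X0 Y0)
next
  case 2 then show ?case by (simp add: X_Suc Y_Suc X0 Y0 algebra_simps)
next
  case (3 k) then show ?case by (simp only: W_rec) (simp add: algebra_simps power2_eq_square)
qed

lemma Qp_even: "poly (Qp k) (- A) = poly (Qp k) A"
  by (induction k rule: Qp.induct) simp_all

theorem corollary4p9:
  fixes n :: nat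
  assumes "n \<ge> 1"
  shows "(\<exists>q :: real poly. (\<forall>A. p (2 * n) A = (2 - A) * poly q A)
                          \<and> (\<forall>A. poly q (- A) = poly q A))
         \<and> (\<forall>A. p (2 * n + 1) (- A) = p (2 * n + 1) A)"
proof -
  obtain m where m: "n = Suc m" using assms by (cases n) auto
  have "\<forall>A. p (2 * n) A = (2 - A) * poly (Qp m) A"
    using W_poly p_even m by simp
  moreover have "\<forall>A. p (2 * n + 1) (- A) = p (2 * n + 1) A"
    using Z_even p_odd by simp
  ultimately show ?thesis using Qp_even by blast
qed

end
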